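(* (a) NDisc and PosDisc are reducible to each other. (b) UDisc and AsDisc are reducible to each other.
   Context: A probabilistic weighted automaton over a finite alphabet $\Sigma$ is a tuple $A=(Q,\rho_I,\Sigma,\delta,\gamma)$ where $Q$ is a finite set of states, $\rho_I$ is a probability distribution on $Q$, $\delta:Q\times\Sigma\to\mathcal D(Q)$ assigns to each state and letter a probability distribution on $Q$, and $\gamma:Q\times\Sigma\times Q\to\mathbb Q$ is a weight function. A run over an infinite word $w=\sigma_1\sigma_2\dots$ is a sequence $r=q_0\sigma_1q_1\sigma_2\dots$ with $\rho_I(q_0)>0$ and $\delta(q_i,\sigma_{i+1})(q_{i+1})>0$ for all $i$; its weight sequence is $\gamma(r)=v_0v_1\dots$ with $v_i=\gamma(q_i,\sigma_{i+1},q_{i+1})$. For each $w$, the probabilities of finite run prefixes $\rho_I(q_0)\prod_{i=1}^k\delta(q_{i-1},\sigma_i)(q_i)$ induce a probability measure $\mathbb P^A$ on runs over $w$. For a value function $\mathrm{Val}$, the positive semantics is $L^{>0}_A(w)=\sup\{\eta\mid \mathbb P^A(\{r:\mathrm{Val}(\gamma(r))\ge\eta\})>0\}$ and the almost-sure semantics is $L^{=1}_A(w)=\sup\{\eta\mid \mathbb P^A(\{r:\mathrm{Val}(\gamma(r))\ge\eta\})=1\}$. Ignoring probabilities (initial states are those with $\rho_I(q)>0$, transitions those with $\delta(q,\sigma)(q')>0$) gives a non-probabilistic automaton; interpreted as nondeterministic its language is $\sup\{\mathrm{Val}(\gamma(r))\mid r\text{ run over }w\}$, interpreted as universal its language is $\inf\{\mathrm{Val}(\gamma(r))\mid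 r\text{ run over }w\}$. The discounted-sum value function with discount factor $0<\lambda<1$ is $\mathsf{Disc}_\lambda(v)=\sum_{i=0}^\infty\lambda^i v_i$; each $\mathsf{Disc}$-automaton comes with its own discount factor $\lambda\in(0,1)$. NDisc, UDisc, PosDisc, AsDisc denote the classes of $\mathsf{Disc}$-automata under nondeterministic, universal, positive and almost-sure semantics. A class $\mathcal C$ is reducible to $\mathcal C'$ if for every $A\in\mathcal C$ there is $A'\in\mathcal C'$ over the same alphabet defining the same quantitative language $\Sigma^\omega\to\mathbb R$. *)

theory Defs
  imports "HOL-Probability.Probability"
begin

text \<open>Probabilistic weighted automata over a finite alphabet 'a (type class finite).\<close>

record 'a pwa =
  pwa_states :: "nat set"
  pwa_init   :: "nat \<Rightarrow> real"
  pwa_trans  :: "nat \<Rightarrow> 'a \<Rightarrow> nat \<Rightarrow> real"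
  pwa_weight :: "nat \<Rightarrow> 'a \<Rightarrow> nat \<Rightarrow> rat"
  pwa_disc   :: real

definition is_distr_on :: "nat set \<Rightarrow> (nat \<Rightarrow> real) \<Rightarrow> bool" where
  "is_distr_on Q d \<longleftrightarrow> (\<forall>q. 0 \<le> d q) \<and> (\<forall>q. q \<notin> Q \<longrightarrow> d q = 0) \<and> (\<Sum>q\<in>Q. d q) = 1"

definition wf_disc_aut :: "'a pwa \<Rightarrow> bool" where
  "wf_disc_aut A \<longleftrightarrow> finite (pwa_states A)
     \<and> is_distr_on (pwa_states A) (pwa_init A)
     \<and> (\<forall>q\<in>pwa_states A. \<forall>\<sigma>. is_distr_on (pwa_states A) (pwa_trans A q \<sigma>))
     \<and> 0 < pwa_disc A \<and> pwa_disc A < 1"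

text \<open>Words are w :: nat => 'a, with w 0 the first letter sigma_1.
  A run r :: nat => nat encodes q_0 q_1 q_2 ...\<close>
definition is_run :: "'a pwa \<Rightarrow> (nat \<Rightarrow> 'a) \<Rightarrow> (nat \<Rightarrow> nat) \<Rightarrow> bool" where
  "is_run A w r \<longleftrightarrow> pwa_init A (r 0) > 0 \<and> (\<forall>i. pwa_trans A (r i) (w i) (r (Suc i)) > 0)"

definition weight_seq :: "'a pwa \<Rightarrow> (nat \<Rightarrow> 'a) \<Rightarrow> (nat \<Rightarrow> nat) \<Rightarrow> nat \<Rightarrow> real" where
  "weight_seq A w r i = real_of_rat (pwa_weight A (r i) (w i) (r (Suc i)))"

definition Disc :: "real \<Rightarrow> (nat \<Rightarrow> real) \<Rightarrow> real" where
  "Disc lam v = (\<Sum>i. lam ^ i * v i)"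

definition disc_val :: "'a pwa \<Rightarrow> (nat \<Rightarrow> 'a) \<Rightarrow> (nat \<Rightarrow> nat) \<Rightarrow> real" where
  "disc_val A w r = Disc (pwa_disc A) (weight_seq A w r)"

definition run_space :: "(nat \<Rightarrow> nat) measure" where
  "run_space = PiM UNIV (\<lambda>_. count_space UNIV)"

definition run_prob :: "'a pwa \<Rightarrow> (nat \<Rightarrow> 'a) \<Rightarrow> (nat \<Rightarrow> nat) measure" where
  "run_prob A w = (THE M. prob_space M \<and> sets M = sets run_space \<and>
     (\<forall>n q. emeasure M {r \<in> space M. \<forall>i\<le>n. r i = q i}
        = ennreal (pwa_init A (q 0) * (\<Prod>i<n. pwa_trans A (q i) (w i) (q (Suc i))))))"

definition NDisc_lang :: "'a pwa \<Rightarrow> (nat \<Rightarrow> 'a) \<Rightarrow> real" where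
  "NDisc_lang A w = Sup {disc_val A w r | r. is_run A w r}"

definition UDisc_lang :: "'a pwa \<Rightarrow> (nat \<Rightarrow> 'a) \<Rightarrow> real" where
  "UDisc_lang A w = Inf {disc_val A w r | r. is_run A w r}"

definition PosDisc_lang :: "'a pwa \<Rightarrow> (nat \<Rightarrow> 'a) \<Rightarrow> real" where
  "PosDisc_lang A w = Sup {\<eta>. measure (run_prob A w) {r \<in> space (run_prob A w). disc_val A w r \<ge> \<eta>} > 0}"

definition AsDisc_lang :: "'a pwa \<Rightarrow> (nat \<Rightarrow> 'a) \<Rightarrow> real" where
  "AsDisc_lang A w = Sup {\<eta>. measure (run_prob A w) {r \<in> space (run_prob A w). disc_val A w r \<ge> \<eta>} = 1}"

definition reducible :: "('a pwa \<Rightarrow> (nat \<Rightarrow> 'a) \<Rightarrow> real) \<Rightarrow> ('a pwa \<Rightarrow> (nat \<Rightarrow> 'a) \<Rightarrow> real) \<Rightarrow> bool" where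
  "reducible S1 S2 \<longleftrightarrow> (\<forall>A. wf_disc_aut A \<longrightarrow> (\<exists>B. wf_disc_aut B \<and> S1 A = S2 B))"

end

theory Submission
  imports Defs
begin

definition cyl :: "nat \<Rightarrow> (nat \<Rightarrow> nat) \<Rightarrow> (nat \<Rightarrow> nat) set" where
  "cyl n q = {r. \<forall>i\<le>n. r i = q i}"

lemma space_run_space[simp]: "space run_space = UNIV"
  by (simp add: run_space_def space_PiM)

lemma cyl_sets[measurable]: "cyl n q \<in> sets run_space"
proof -
  have "cyl n q = (\<Inter>i\<in>{..n}. {r \<in> space run_space. r i = q i})"
    by (auto simp: cyl_def)
  also have "\<dots> \<in> sets run_space"
    unfolding run_space_def by measurable
  finally show ?thesis .
qed

lemma sets_run_space_cyl:
  "sets run_space = sigma_sets UNIV (insert {} (range (\<lambda>(n,q). cyl n q)))"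
  (is "_ = sigma_sets UNIV ?E")
proof
  show "sigma_sets UNIV ?E \<subseteq> sets run_space"
  proof -
    have "?E \<subseteq> sets run_space" by auto
    from sets.sigma_sets_subset[OF this] show ?thesis by simp
  qed
next
  interpret S: sigma_algebra UNIV "sigma_sets UNIV ?E"
    by (rule sigma_algebra_sigma_sets) auto
  have "sets run_space = sigma_sets UNIV {{f. f i \<in> A} | i A. True}"
    unfolding run_space_def sets_PiM_single by (simp add: space_PiM)
  also have "\<dots> \<subseteq> sigma_sets UNIV ?E"
  proof (rule sigma_sets_mono, safe)
    fix i and A :: "nat set"
    have "{f. f i \<in> A} = (\<Union>xs\<in>{xs::nat list. length xs = Suc i \<and> xs ! i \<in> A}. cyl i (\<lambda>j. xs ! j))"
    proof safe
      fix f :: "nat \<Rightarrow> nat" assume "f i \<in> A"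
      then show "f \<in> (\<Union>xs\<in>{xs::nat list. length xs = Suc i \<and> xs ! i \<in> A}. cyl i (\<lambda>j. xs ! j))"
        by (intro UN_I[of "map f [0..<Suc i]"]) (auto simp: cyl_def nth_append simp del: upt_Suc)
    qed (auto simp: cyl_def)
    also have "\<dots> \<in> sigma_sets UNIV ?E"
      by (intro S.countable_UN) (auto intro!: sigma_sets.Basic)
    finally show "{f. f i \<in> A} \<in> sigma_sets UNIV ?E" .
  qed
  finally show "sets run_space \<subseteq> sigma_sets UNIV ?E" .
qed

lemma cyl_Int: "cyl n q \<inter> cyl m p \<in> insert {} (range (\<lambda>(n,q). cyl n q))"
proof -
  { fix n m q p assume nm: "n \<le> (m::nat)"
    have "cyl n q \<inter> cyl m p \<in> insert {} (range (\<lambda>(n,q). cyl n q))"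
    proof (cases "\<forall>i\<le>n. q i = p i")
      case True
      then have "cyl n q \<inter> cyl m p = cyl m p" using nm by (auto simp: cyl_def)
      then show ?thesis by auto
    next
      case False
      then have "cyl n q \<inter> cyl m p = {}" using nm by (auto simp: cyl_def)
      then show ?thesis by auto
    qed }
  from this[of n m q p] this[of m n p q] show ?thesis
    by (cases "n \<le> m") (auto simp: Int_commute)
qed

definition pp :: "'a pwa \<Rightarrow> (nat\<Rightarrow>'a) \<Rightarrow> (nat\<Rightarrow>nat) \<Rightarrow> nat \<Rightarrow> real" where
  "pp A w q n = pwa_init A (q 0) * (\<Prod>i<n. pwa_trans A (q i) (w i) (q (Suc i)))"

definition good :: "'a pwa \<Rightarrow> (nat\<Rightarrow>'a) \<Rightarrow> (nat \<Rightarrow> nat) measure \<Rightarrow> bool" where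
  "good A w M \<longleftrightarrow> prob_space M \<and> sets M = sets run_space \<and>
     (\<forall>n q. emeasure M {r \<in> space M. \<forall>i\<le>n. r i = q i} = ennreal (pp A w q n))"

lemma run_prob_THE: "run_prob A w = (THE M. good A w M)"
  unfolding run_prob_def good_def pp_def ..

lemma good_space: "good A w M \<Longrightarrow> space M = UNIV"
  unfolding good_def using sets_eq_imp_space_eq[of M run_space] by auto

lemma good_cyl: "good A w M \<Longrightarrow> emeasure M (cyl n q) = ennreal (pp A w q n)"
  using good_space[of A w M] unfolding good_def cyl_def by auto

lemma good_unique:
  assumes M: "good A w M" and N: "good A w N" shows "M = N"
proof (rule measure_eqI_generator_eq_countable[where \<Omega>=UNIV and E="insert {} (range (\<lambda>(n,q). cyl n q))"
        and A="range (\<lambda>k. cyl 0 (\<lambda>_. k))"])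
  show "Int_stable (insert {} (range (\<lambda>(n,q). cyl n q)))"
    unfolding Int_stable_def using cyl_Int by auto
  show "sets M = sigma_sets UNIV (insert {} (range (\<lambda>(n,q). cyl n q)))"
    using M sets_run_space_cyl unfolding good_def by auto
  show "sets N = sigma_sets UNIV (insert {} (range (\<lambda>(n,q). cyl n q)))"
    using N sets_run_space_cyl unfolding good_def by auto
  fix X assume "X \<in> insert {} (range (\<lambda>(n,q). cyl n q))"
  then show "emeasure M X = emeasure N X"
    using good_cyl[OF M] good_cyl[OF N] by auto
next
  show "(\<Union>(range (\<lambda>k. cyl 0 (\<lambda>_. k)))) = UNIV" by (auto simp: cyl_def)
  fix a assume "a \<in> range (\<lambda>k. cyl 0 (\<lambda>_. k))"
  then show "emeasure M a \<noteq> \<infinity>" using good_cyl[OF M] by auto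
qed auto

lemma distr_pmf:
  assumes "finite Q" "is_distr_on Q d"
  shows "pmf (embed_pmf d) x = d x"
proof (rule pmf_embed_pmf)
  show "\<And>x. 0 \<le> d x" using assms unfolding is_distr_on_def by auto
  have "(\<integral>\<^sup>+x. ennreal (d x) \<partial>count_space UNIV) = (\<Sum>x\<in>Q. ennreal (d x))"
    using assms unfolding is_distr_on_def by (intro nn_integral_count_space') auto
  also have "\<dots> = 1" using assms unfolding is_distr_on_def by (simp add: sum_ennreal)
  finally show "(\<integral>\<^sup>+x. ennreal (d x) \<partial>count_space UNIV) = 1" .
qed

definition Dm :: "'a pwa \<Rightarrow> (nat\<Rightarrow>'a) \<Rightarrow> nat \<times> nat \<Rightarrow> nat pmf" where
  "Dm A w j = (case j of (0, _) \<Rightarrow> embed_pmf (pwa_init A)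
     | (Suc i, q) \<Rightarrow> if q \<in> pwa_states A then embed_pmf (pwa_trans A q (w i)) else return_pmf 0)"

primrec Rr :: "(nat \<times> nat \<Rightarrow> nat) \<Rightarrow> nat \<Rightarrow> nat" where
  "Rr \<omega> 0 = \<omega> (0,0)"
| "Rr \<omega> (Suc n) = \<omega> (Suc n, Rr \<omega> n)"

definition Om :: "'a pwa \<Rightarrow> (nat\<Rightarrow>'a) \<Rightarrow> (nat \<times> nat \<Rightarrow> nat) measure" where
  "Om A w = PiM UNIV (\<lambda>j. measure_pmf (Dm A w j))"

lemma space_Om[simp]: "space (Om A w) = UNIV"
  by (simp add: Om_def space_PiM)

lemma meas_pmf_eq: "measurable N (measure_pmf p) = measurable N (count_space UNIV)"
  by (rule measurable_cong_sets) auto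

lemma comp_meas: "(\<lambda>\<omega>. \<omega> j) \<in> measurable (Om A w) (count_space UNIV)"
proof -
  have "(\<lambda>\<omega>. \<omega> j) \<in> measurable (Om A w) (measure_pmf (Dm A w j))"
    unfolding Om_def by (rule measurable_component_singleton) auto
  then show ?thesis unfolding meas_pmf_eq .
qed

lemma Rr_meas: "(\<lambda>\<omega>. Rr \<omega> n) \<in> measurable (Om A w) (count_space UNIV)"
proof (induction n)
  case 0
  show ?case using comp_meas[of "(0,0)"] by simp
next
  case (Suc n)
  show ?case
    using measurable_compose_countable[where f="\<lambda>q \<omega>. \<omega> (Suc n, q)" and g="\<lambda>\<omega>. Rr \<omega> n", OF comp_meas Suc]
    by simp
qed

lemma Rr_meas': "Rr \<in> measurable (Om A w) run_space"
proof -
  have "(\<lambda>\<omega> n. Rr \<omega> n) \<in> measurable (Om A w) (PiM UNIV (\<lambda>_. count_space UNIV))"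
    by (rule measurable_PiM_single') (auto simp: Rr_meas)
  then show ?thesis unfolding run_space_def by simp
qed

definition Jn :: "nat \<Rightarrow> (nat \<Rightarrow> nat) \<Rightarrow> (nat \<times> nat) set" where
  "Jn n q = insert (0,0) ((\<lambda>i. (Suc i, q i)) ` {..<n})"

lemma Rr_cyl: "(\<forall>i\<le>n. Rr \<omega> i = q i) \<longleftrightarrow> (\<forall>j\<in>Jn n q. \<omega> j = q (fst j))"
proof (induction n)
  case 0
  then show ?case by (simp add: Jn_def)
next
  case (Suc n)
  have "(\<forall>i\<le>Suc n. Rr \<omega> i = q i) \<longleftrightarrow> (\<forall>i\<le>n. Rr \<omega> i = q i) \<and> Rr \<omega> (Suc n) = q (Suc n)"
    by (auto simp: le_Suc_eq)
  also have "\<dots> \<longleftrightarrow> (\<forall>i\<le>n. Rr \<omega> i = q i) \<and> \<omega> (Suc n, q n) = q (Suc n)"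
    by auto
  also have "\<dots> \<longleftrightarrow> (\<forall>j\<in>Jn n q. \<omega> j = q (fst j)) \<and> \<omega> (Suc n, q n) = q (Suc n)"
    using Suc by simp
  also have "\<dots> \<longleftrightarrow> (\<forall>j\<in>Jn (Suc n) q. \<omega> j = q (fst j))"
    by (auto simp: Jn_def lessThan_Suc)
  finally show ?case .
qed

lemma prefix_zero:
  fixes g :: "nat \<Rightarrow> nat \<Rightarrow> nat \<Rightarrow> real"
  assumes init0: "\<forall>s. s \<notin> Q \<longrightarrow> ini s = 0"
    and g0: "\<forall>i s t. s \<in> Q \<longrightarrow> t \<notin> Q \<longrightarrow> g i s t = 0"
  shows "q n \<notin> Q \<Longrightarrow> ini (q 0) * (\<Prod>i<n. g i (q i) (q (Suc i))) = 0"
proof (induction n)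
  case 0
  then show ?case using init0 by simp
next
  case (Suc n)
  show ?case
  proof (cases "q n \<in> Q")
    case True
    then show ?thesis using g0 Suc.prems by (simp add: lessThan_Suc)
  next
    case False
    then have "ini (q 0) * (\<Prod>i<n. g i (q i) (q (Suc i))) = 0" using Suc.IH by blast
    then show ?thesis unfolding prod.lessThan_Suc mult.assoc[symmetric] by simp
  qed
qed

lemma prefix_eq:
  fixes g g' :: "nat \<Rightarrow> nat \<Rightarrow> nat \<Rightarrow> real"
  assumes init0: "\<forall>s. s \<notin> Q \<longrightarrow> ini s = 0"
    and g0: "\<forall>i s t. s \<in> Q \<longrightarrow> t \<notin> Q \<longrightarrow> g i s t = 0"
    and g': "\<forall>i s t. s \<in> Q \<longrightarrow> g' i s t = g i s t"
  shows "ini (q 0) * (\<Prod>i<n. g' i (q i) (q (Suc i))) = ini (q 0) * (\<Prod>i<n. g i (q i) (q (Suc i)))"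
proof (induction n)
  case 0
  then show ?case by simp
next
  case (Suc n)
  have g0': "\<forall>i s t. s \<in> Q \<longrightarrow> t \<notin> Q \<longrightarrow> g' i s t = 0" using g0 g' by auto
  show ?case
  proof (cases "q n \<in> Q")
    case True
    then have "g' n (q n) (q (Suc n)) = g n (q n) (q (Suc n))" using g' by auto
    then show ?thesis using Suc.IH
      unfolding prod.lessThan_Suc mult.assoc[symmetric] by metis
  next
    case False
    then have z1: "ini (q 0) * (\<Prod>i<n. g i (q i) (q (Suc i))) = 0"
      and z2: "ini (q 0) * (\<Prod>i<n. g' i (q i) (q (Suc i))) = 0"
      using prefix_zero[OF init0 g0, of q n] prefix_zero[OF init0 g0', of q n] by auto
    show ?thesis unfolding prod.lessThan_Suc mult.assoc[symmetric] z1 z2 by simp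
  qed
qed

lemma good_exists:
  assumes wf: "wf_disc_aut A"
  shows "\<exists>M. good A w M"
proof -
  let ?Q = "pwa_states A"
  have fin: "finite ?Q" and di: "is_distr_on ?Q (pwa_init A)"
    and dt: "\<And>q a. q \<in> ?Q \<Longrightarrow> is_distr_on ?Q (pwa_trans A q a)"
    using wf unfolding wf_disc_aut_def by auto
  have ps: "prob_space (Om A w)" unfolding Om_def
    by (rule prob_space_PiM) (simp add: prob_space_measure_pmf)
  define M where "M = distr (Om A w) run_space Rr"
  have "prob_space M" unfolding M_def
    by (rule prob_space.prob_space_distr[OF ps Rr_meas'])
  moreover have sM: "sets M = sets run_space" unfolding M_def by simp
  moreover have "emeasure M {r \<in> space M. \<forall>i\<le>n. r i = q i} = ennreal (pp A w q n)" for n q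
  proof -
    have spM: "space M = UNIV" using sM sets_eq_imp_space_eq by fastforce
    have "{r \<in> space M. \<forall>i\<le>n. r i = q i} = cyl n q" by (auto simp: spM cyl_def)
    then have "emeasure M {r \<in> space M. \<forall>i\<le>n. r i = q i} = emeasure (Om A w) (Rr -` cyl n q)"
      unfolding M_def by (simp add: emeasure_distr[OF Rr_meas'])
    also have "Rr -` cyl n q = prod_emb UNIV (\<lambda>j. measure_pmf (Dm A w j)) (Jn n q) (Pi\<^sub>E (Jn n q) (\<lambda>j. {q (fst j)}))"
      by (auto simp: cyl_def prod_emb_iff Rr_cyl PiE_iff)
    also have "emeasure (Om A w) \<dots> = (\<Prod>j\<in>Jn n q. emeasure (measure_pmf (Dm A w j)) {q (fst j)})"
      unfolding Om_def
      by (rule emeasure_PiM_emb) (auto simp: prob_space_measure_pmf Jn_def)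
    also have "\<dots> = (\<Prod>j\<in>Jn n q. ennreal (pmf (Dm A w j) (q (fst j))))"
      by (simp add: emeasure_pmf_single)
    also have "\<dots> = ennreal (\<Prod>j\<in>Jn n q. pmf (Dm A w j) (q (fst j)))"
      by (rule prod_ennreal) simp
    also have "(\<Prod>j\<in>Jn n q. pmf (Dm A w j) (q (fst j)))
        = pmf (Dm A w (0,0)) (q 0) * (\<Prod>i<n. pmf (Dm A w (Suc i, q i)) (q (Suc i)))"
      unfolding Jn_def
      by (subst prod.insert) (auto simp: prod.reindex inj_on_def)
    also have "\<dots> = pwa_init A (q 0) * (\<Prod>i<n. pmf (Dm A w (Suc i, q i)) (q (Suc i)))"
      by (simp add: Dm_def distr_pmf[OF fin di])
    also have "\<dots> = pp A w q n"
      unfolding pp_def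
    proof (rule prefix_eq[where Q="?Q"])
      show "\<forall>s. s \<notin> ?Q \<longrightarrow> pwa_init A s = 0" using di unfolding is_distr_on_def by auto
      show "\<forall>i s t. s \<in> ?Q \<longrightarrow> t \<notin> ?Q \<longrightarrow> pwa_trans A s (w i) t = 0"
        using dt unfolding is_distr_on_def by auto
      show "\<forall>i s t. s \<in> ?Q \<longrightarrow> pmf (Dm A w (Suc i, s)) t = pwa_trans A s (w i) t"
        by (auto simp: Dm_def distr_pmf[OF fin dt])
    qed
    finally show ?thesis .
  qed
  ultimately show ?thesis unfolding good_def by blast
qed

lemma good_run_prob:
  assumes "wf_disc_aut A" shows "good A w (run_prob A w)"
proof -
  obtain M where M: "good A w M" using good_exists[OF assms] by blast
  show ?thesis unfolding run_prob_THE
    by (rule theI[of "good A w", OF M]) (rule good_unique[OF _ M], assumption)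
qed

lemma tail_bound:
  fixes f :: "nat \<Rightarrow> real" and lam c :: real
  assumes lam: "0 < lam" "lam < 1" and f0: "\<And>i. i < n \<Longrightarrow> f i = 0"
    and fb: "\<And>i. \<bar>f i\<bar> \<le> c * lam ^ i"
  shows "\<bar>suminf f\<bar> \<le> c * lam ^ n / (1 - lam)"
proof -
  have sg: "summable (\<lambda>i. c * lam ^ i)"
    using lam by (intro summable_mult summable_geometric) auto
  have sf: "summable f"
    by (rule summable_comparison_test'[OF sg]) (use fb in auto)
  have "suminf f = (\<Sum>i. f (i + n)) + (\<Sum>i<n. f i)"
    by (rule suminf_split_initial_segment[OF sf])
  also have "(\<Sum>i<n. f i) = 0" using f0 by simp
  finally have eq: "suminf f = (\<Sum>i. f (i + n))" by simp
  have sg2: "summable (\<lambda>i. (c * lam ^ n) * lam ^ i)"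
    using lam by (intro summable_mult summable_geometric) auto
  have fb2: "norm (f (i + n)) \<le> (c * lam ^ n) * lam ^ i" for i
    using fb[of "i+n"] by (simp add: power_add mult_ac)
  have sn: "summable (\<lambda>i. norm (f (i + n)))"
    by (rule summable_comparison_test'[OF sg2]) (use fb2 in auto)
  have "\<bar>\<Sum>i. f (i + n)\<bar> \<le> (\<Sum>i. norm (f (i + n)))"
    using summable_norm[OF sn] by simp
  also have "\<dots> \<le> (\<Sum>i. (c * lam ^ n) * lam ^ i)"
    by (rule suminf_le[OF fb2 sn sg2])
  also have "\<dots> = c * lam ^ n / (1 - lam)"
    using lam by (simp add: suminf_mult summable_geometric suminf_geometric)
  finally show ?thesis using eq by simp
qed

lemma Disc_summable:
  fixes lam W :: real and v :: "nat \<Rightarrow> real"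
  assumes lam: "0 < lam" "lam < 1" and vb: "\<And>i. \<bar>v i\<bar> \<le> W"
  shows "summable (\<lambda>i. lam ^ i * v i)"
proof -
  have sg: "summable (\<lambda>i. W * lam ^ i)"
    using lam by (intro summable_mult summable_geometric) auto
  show ?thesis
    by (rule summable_comparison_test'[OF sg])
       (use vb lam in \<open>auto simp: abs_mult mult.commute intro!: mult_left_mono\<close>)
qed

lemma Disc_bound:
  fixes lam W :: real and v :: "nat \<Rightarrow> real"
  assumes lam: "0 < lam" "lam < 1" and vb: "\<And>i. \<bar>v i\<bar> \<le> W"
  shows "\<bar>Disc lam v\<bar> \<le> W / (1 - lam)"
  unfolding Disc_def
  using tail_bound[OF lam, of 0 "\<lambda>i. lam ^ i * v i" W] vb lam
  by (auto simp: abs_mult mult.commute intro!: mult_left_mono)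

lemma Disc_close:
  fixes lam W :: real and v v' :: "nat \<Rightarrow> real"
  assumes lam: "0 < lam" "lam < 1" and vb: "\<And>i. \<bar>v i\<bar> \<le> W" and vb': "\<And>i. \<bar>v' i\<bar> \<le> W"
    and eq: "\<And>i. i < n \<Longrightarrow> v i = v' i"
  shows "\<bar>Disc lam v - Disc lam v'\<bar> \<le> 2 * W * lam ^ n / (1 - lam)"
proof -
  have "Disc lam v - Disc lam v' = (\<Sum>i. lam ^ i * v i - lam ^ i * v' i)"
    unfolding Disc_def by (rule suminf_diff[OF Disc_summable[OF lam vb] Disc_summable[OF lam vb']])
  also have "\<bar>\<dots>\<bar> \<le> 2 * W * lam ^ n / (1 - lam)"
  proof (rule tail_bound[OF lam])
    show "\<And>i. i < n \<Longrightarrow> lam ^ i * v i - lam ^ i * v' i = 0" using eq by simp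
    fix i
    have "\<bar>lam ^ i * v i - lam ^ i * v' i\<bar> = lam ^ i * \<bar>v i - v' i\<bar>"
      using lam by (simp add: right_diff_distrib[symmetric] abs_mult)
    also have "\<dots> \<le> lam ^ i * (2 * W)"
      using vb[of i] vb'[of i] lam by (intro mult_left_mono) auto
    finally show "\<bar>lam ^ i * v i - lam ^ i * v' i\<bar> \<le> 2 * W * lam ^ i" by (simp add: mult_ac)
  qed
  finally show ?thesis .
qed

lemma small_pow:
  fixes lam W eps :: real
  assumes lam: "0 < lam" "lam < 1" and W: "0 \<le> W" and eps: "0 < eps"
  shows "\<exists>n. 2 * W * lam ^ n / (1 - lam) < eps"
proof -
  obtain n where n: "lam ^ n < eps * (1 - lam) / (2 * W + 1)"
    using real_arch_pow_inv[of "eps * (1 - lam) / (2 * W + 1)" lam] lam W eps by auto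
  have "2 * W * lam ^ n \<le> (2 * W + 1) * lam ^ n" using lam by simp
  also have "\<dots> < (2 * W + 1) * (eps * (1 - lam) / (2 * W + 1))"
    using n W by (intro mult_strict_left_mono) auto
  also have "\<dots> = eps * (1 - lam)" using W by simp
  finally have "2 * W * lam ^ n < eps * (1 - lam)" .
  then show ?thesis using lam by (intro exI[of _ n]) (simp add: divide_less_eq)
qed

lemma distr_pos_exists:
  assumes "is_distr_on Q d" shows "\<exists>q\<in>Q. d q > 0"
proof (rule ccontr)
  assume "\<not> ?thesis"
  then have "\<forall>q\<in>Q. d q = 0" using assms unfolding is_distr_on_def by (meson antisym not_less)
  then have "(\<Sum>q\<in>Q. d q) = 0" by simp
  then show False using assms unfolding is_distr_on_def by simp
qed

lemma run_in_Q:
  assumes wf: "wf_disc_aut A" and r: "is_run A w r"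
  shows "r i \<in> pwa_states A"
proof (induction i)
  case 0
  then show ?case using wf r unfolding wf_disc_aut_def is_distr_on_def is_run_def
    by (metis less_irrefl)
next
  case (Suc i)
  have "pwa_trans A (r i) (w i) (r (Suc i)) > 0" using r unfolding is_run_def by auto
  then show ?case using wf Suc unfolding wf_disc_aut_def is_distr_on_def
    by (metis less_irrefl)
qed

lemma run_exists:
  assumes wf: "wf_disc_aut A" shows "\<exists>r. is_run A w r"
proof -
  let ?Q = "pwa_states A"
  obtain q0 where q0: "q0 \<in> ?Q" "pwa_init A q0 > 0"
    using wf distr_pos_exists unfolding wf_disc_aut_def by blast
  have nx: "\<exists>s. s \<in> ?Q \<and> pwa_trans A q a s > 0" if "q \<in> ?Q" for q a
    using wf that distr_pos_exists unfolding wf_disc_aut_def by blast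
  define nxt where "nxt q a = (SOME s. s \<in> ?Q \<and> pwa_trans A q a s > 0)" for q a
  have nxt: "nxt q a \<in> ?Q \<and> pwa_trans A q a (nxt q a) > 0" if "q \<in> ?Q" for q a
    unfolding nxt_def by (rule someI_ex[OF nx[OF that]])
  define r where "r = rec_nat q0 (\<lambda>n s. nxt s (w n))"
  have rQ: "r n \<in> ?Q" for n
    by (induction n) (auto simp: r_def q0 nxt)
  have "is_run A w r" unfolding is_run_def
    using q0 nxt[OF rQ] by (auto simp: r_def)
  then show ?thesis by blast
qed

definition Wb :: "'a::finite pwa \<Rightarrow> real" where
  "Wb A = Max (insert 0 ((\<lambda>(q,a,s). \<bar>real_of_rat (pwa_weight A q a s)\<bar>) ` (pwa_states A \<times> UNIV \<times> pwa_states A)))"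

lemma Wb_nonneg: "wf_disc_aut A \<Longrightarrow> 0 \<le> Wb A"
  unfolding Wb_def wf_disc_aut_def by (intro Max_ge) auto

lemma weight_bound:
  assumes wf: "wf_disc_aut (A::'a::finite pwa)" and r: "is_run A w r"
  shows "\<bar>weight_seq A w r i\<bar> \<le> Wb A"
proof -
  have fin: "finite (pwa_states A)" using wf unfolding wf_disc_aut_def by auto
  have "(r i, w i, r (Suc i)) \<in> pwa_states A \<times> UNIV \<times> pwa_states A"
    using run_in_Q[OF wf r] by auto
  then show ?thesis unfolding Wb_def weight_seq_def
    using fin by (intro Max_ge) force+
qed

lemma val_bound:
  assumes wf: "wf_disc_aut (A::'a::finite pwa)" and r: "is_run A w r"
  shows "\<bar>disc_val A w r\<bar> \<le> Wb A / (1 - pwa_disc A)"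
  unfolding disc_val_def
  by (rule Disc_bound) (use wf weight_bound[OF wf r] in \<open>auto simp: wf_disc_aut_def\<close>)

lemma val_close:
  assumes wf: "wf_disc_aut (A::'a::finite pwa)" and r: "is_run A w r" and r': "is_run A w r'"
    and eq: "\<And>i. i \<le> n \<Longrightarrow> r i = r' i"
  shows "\<bar>disc_val A w r - disc_val A w r'\<bar> \<le> 2 * Wb A * pwa_disc A ^ n / (1 - pwa_disc A)"
  unfolding disc_val_def
  by (rule Disc_close) (use wf weight_bound[OF wf r] weight_bound[OF wf r'] eq in \<open>auto simp: wf_disc_aut_def weight_seq_def\<close>)

lemma val_cont:
  assumes wf: "wf_disc_aut (A::'a::finite pwa)" and eps: "0 < eps"
  shows "\<exists>n. \<forall>r r'. is_run A w r \<longrightarrow> is_run A w r' \<longrightarrow> (\<forall>i\<le>n. r i = r' i) \<longrightarrow>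
           \<bar>disc_val A w r - disc_val A w r'\<bar> < eps"
proof -
  obtain n where n: "2 * Wb A * pwa_disc A ^ n / (1 - pwa_disc A) < eps"
    using small_pow[of "pwa_disc A" "Wb A" eps] wf Wb_nonneg[OF wf] eps unfolding wf_disc_aut_def by auto
  show ?thesis
  proof (rule exI[of _ n], intro allI impI)
    fix r r' assume "is_run A w r" "is_run A w r'" "\<forall>i\<le>n. r i = r' i"
    then show "\<bar>disc_val A w r - disc_val A w r'\<bar> < eps"
      using val_close[OF wf, of w r r' n] n by auto
  qed
qed

lemma pp_cong: "(\<And>i. i \<le> n \<Longrightarrow> q i = q' i) \<Longrightarrow> pp A w q n = pp A w q' n"
  unfolding pp_def by (auto intro!: prod.cong)

lemma pp_Suc: "pp A w q (Suc n) = pp A w q n * pwa_trans A (q n) (w n) (q (Suc n))"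
  unfolding pp_def by (simp add: prod.lessThan_Suc mult.assoc)

lemma pp_pos_run:
  assumes "\<forall>n. pp A w r n > 0" shows "is_run A w r"
  unfolding is_run_def
proof
  show "pwa_init A (r 0) > 0" using assms[rule_format, of 0] by (simp add: pp_def)
  show "\<forall>i. 0 < pwa_trans A (r i) (w i) (r (Suc i))"
  proof
    fix i
    have "0 < pp A w r i * pwa_trans A (r i) (w i) (r (Suc i))"
      using assms[rule_format, of "Suc i"] by (simp add: pp_Suc)
    then show "0 < pwa_trans A (r i) (w i) (r (Suc i))"
      using assms[rule_format, of i] by (simp add: zero_less_mult_iff)
  qed
qed

lemma run_pp_pos:
  assumes "is_run A w r" shows "pp A w r n > 0"
  using assms unfolding is_run_def pp_def by (auto intro!: prod_pos mult_pos_pos)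

context
  fixes A :: "'a::finite pwa" and w :: "nat \<Rightarrow> 'a"
  assumes wf: "wf_disc_aut A"
begin

lemma G: "good A w (run_prob A w)" by (rule good_run_prob[OF wf])

lemma P_space[simp]: "space (run_prob A w) = UNIV" using good_space[OF G] .
lemma P_sets[simp]: "sets (run_prob A w) = sets run_space" using G unfolding good_def by auto
lemma P_prob: "prob_space (run_prob A w)" using G unfolding good_def by auto

lemma P_cyl_sets: "cyl n q \<in> sets (run_prob A w)" by simp

lemma P_cyl_emeasure: "emeasure (run_prob A w) (cyl n q) = ennreal (pp A w q n)"
  by (rule good_cyl[OF G])

lemma P_cyl_measure: "pp A w q n \<ge> 0 \<Longrightarrow> measure (run_prob A w) (cyl n q) = pp A w q n"
  unfolding measure_def P_cyl_emeasure by simp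

lemma P_AE_run: "AE r in run_prob A w. is_run A w r"
proof -
  have "AE r in run_prob A w. pp A w r n > 0" for n
  proof -
    have "AE r in run_prob A w. \<forall>xs::nat list. r \<in> cyl n (\<lambda>i. xs ! i) \<longrightarrow> pp A w (\<lambda>i. xs ! i) n > 0"
      unfolding AE_all_countable
    proof
      fix xs :: "nat list"
      show "AE r in run_prob A w. r \<in> cyl n (\<lambda>i. xs ! i) \<longrightarrow> pp A w (\<lambda>i. xs ! i) n > 0"
      proof (cases "pp A w (\<lambda>i. xs ! i) n > 0")
        case True then show ?thesis by simp
      next
        case False
        then have "cyl n (\<lambda>i. xs ! i) \<in> null_sets (run_prob A w)"
          using P_cyl_emeasure[of n "\<lambda>i. xs ! i"] by (auto simp: null_sets_def ennreal_eq_0_iff)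
        then show ?thesis by (rule AE_I') auto
      qed
    qed
    then show ?thesis
    proof (rule eventually_mono)
      fix r assume h: "\<forall>xs::nat list. r \<in> cyl n (\<lambda>i. xs ! i) \<longrightarrow> pp A w (\<lambda>i. xs ! i) n > 0"
      let ?xs = "map r [0..<Suc n]"
      have c: "\<And>i. i \<le> n \<Longrightarrow> ?xs ! i = r i"
        by (metis add_0 diff_zero le_imp_less_Suc nth_map_upt)
      have "r \<in> cyl n (\<lambda>i. ?xs ! i)" using c by (auto simp: cyl_def)
      then have "pp A w (\<lambda>i. ?xs ! i) n > 0" using h by blast
      moreover have "pp A w (\<lambda>i. ?xs ! i) n = pp A w r n" by (rule pp_cong) (use c in auto)
      ultimately show "pp A w r n > 0" by simp
    qed
  qed
  then have "AE r in run_prob A w. \<forall>n. pp A w r n > 0" unfolding AE_all_countable by blast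
  then show ?thesis by (rule eventually_mono) (rule pp_pos_run)
qed

lemma val_meas: "disc_val A w \<in> borel_measurable run_space"
proof -
  have comp: "(\<lambda>r. r i) \<in> measurable run_space (count_space UNIV)" for i
    unfolding run_space_def by (rule measurable_component_singleton) auto
  have ws: "(\<lambda>r. weight_seq A w r i) \<in> borel_measurable run_space" for i
  proof -
    have "(\<lambda>r. real_of_rat (pwa_weight A (r i) (w i) (r (Suc i)))) \<in> borel_measurable run_space"
      by (rule measurable_compose_countable[where f="\<lambda>a r. real_of_rat (pwa_weight A a (w i) (r (Suc i)))", OF _ comp])
         (rule measurable_compose_countable[where f="\<lambda>b r. real_of_rat (pwa_weight A a (w i) b)" for a, OF _ comp], simp)
    then show ?thesis unfolding weight_seq_def .
  qed
  show ?thesis unfolding disc_val_def Disc_def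
    by (intro borel_measurable_suminf borel_measurable_times measurable_const ws) auto
qed

lemma val_set_sets: "{r \<in> space (run_prob A w). \<eta> \<le> disc_val A w r} \<in> sets (run_prob A w)"
proof -
  have "{r \<in> space run_space. \<eta> \<le> disc_val A w r} \<in> sets run_space"
    using val_meas by measurable
  then show ?thesis by simp
qed

end

context
  fixes A :: "'a::finite pwa" and w :: "nat \<Rightarrow> 'a"
  assumes wf: "wf_disc_aut A"
begin

abbreviation "P \<equiv> run_prob A w"
abbreviation "V \<equiv> {disc_val A w r | r. is_run A w r}"

lemma cyl_compl_sets: "UNIV - cyl n q \<in> sets run_space"
  using sets.compl_sets[OF cyl_sets, of n q] by simp

lemma V_ne: "V \<noteq> {}" using run_exists[OF wf, of w] by auto

lemma V_bdd: "bdd_above V" "bdd_below V"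
proof -
  show "bdd_above V"
  proof (rule bdd_aboveI[of _ "Wb A / (1 - pwa_disc A)"])
    fix v assume "v \<in> V"
    then obtain r where "is_run A w r" "v = disc_val A w r" by blast
    then show "v \<le> Wb A / (1 - pwa_disc A)" using val_bound[OF wf, of w r] by simp
  qed
  show "bdd_below V"
  proof (rule bdd_belowI[of _ "- (Wb A / (1 - pwa_disc A))"])
    fix v assume "v \<in> V"
    then obtain r where "is_run A w r" "v = disc_val A w r" by blast
    then show "- (Wb A / (1 - pwa_disc A)) \<le> v" using val_bound[OF wf, of w r] by simp
  qed
qed

lemma pos_in_run:
  assumes "measure P {r \<in> space P. \<eta> \<le> disc_val A w r} > 0"
  shows "\<exists>r. is_run A w r \<and> \<eta> \<le> disc_val A w r"
proof (rule ccontr)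
  assume "\<not> ?thesis"
  then have "AE r in P. \<not> (\<eta> \<le> disc_val A w r)"
    using P_AE_run[OF wf, of w] by (rule_tac eventually_mono) auto
  then have "emeasure P {r \<in> space P. \<eta> \<le> disc_val A w r} = 0" by (rule emeasure_eq_0_AE)
  then have "measure P {r \<in> space P. \<eta> \<le> disc_val A w r} = 0" by (simp add: measure_def)
  then show False using assms by simp
qed

lemma cyl_AE:
  assumes r: "is_run A w r" and n: "\<forall>r r'. is_run A w r \<longrightarrow> is_run A w r' \<longrightarrow> (\<forall>i\<le>n. r i = r' i) \<longrightarrow>
           \<bar>disc_val A w r - disc_val A w r'\<bar> < eps"
  shows "AE r' in P. r' \<in> cyl n r \<longrightarrow> \<bar>disc_val A w r - disc_val A w r'\<bar> < eps"
  using P_AE_run[OF wf, of w] by (rule eventually_mono) (use n r in \<open>auto simp: cyl_def\<close>)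

lemma cyl_pos: "is_run A w r \<Longrightarrow> measure P (cyl n r) > 0"
  using P_cyl_measure[OF wf, of w r n] run_pp_pos[of A w r n] by simp

lemma run_in_pos:
  assumes r: "is_run A w r" and eps: "0 < eps"
  shows "measure P {r' \<in> space P. disc_val A w r - eps \<le> disc_val A w r'} > 0"
proof -
  obtain n where n: "\<forall>r r'. is_run A w r \<longrightarrow> is_run A w r' \<longrightarrow> (\<forall>i\<le>n. r i = r' i) \<longrightarrow>
           \<bar>disc_val A w r - disc_val A w r'\<bar> < eps"
    using val_cont[OF wf eps, of w] by blast
  interpret prob_space P by (rule P_prob[OF wf])
  have "measure P (cyl n r) \<le> measure P {r' \<in> space P. disc_val A w r - eps \<le> disc_val A w r'}"
    by (rule finite_measure_mono_AE[OF _ val_set_sets[OF wf]])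
       (use cyl_AE[OF r n] in \<open>rule eventually_mono, auto simp: P_space[OF wf] P_sets[OF wf] cyl_compl_sets\<close>)
  then show ?thesis using cyl_pos[OF r, of n] by linarith
qed

lemma Pos_eq: "PosDisc_lang A w = NDisc_lang A w"
proof -
  let ?S = "{\<eta>. measure P {r \<in> space P. \<eta> \<le> disc_val A w r} > 0}"
  obtain r0 where r0: "is_run A w r0" using run_exists[OF wf] by blast
  have "disc_val A w r0 - 1 \<in> ?S" using run_in_pos[OF r0 zero_less_one] by (rule CollectI)
  then have S_ne: "?S \<noteq> {}" by (metis empty_iff)
  have S_bdd: "bdd_above ?S"
  proof -
    obtain B where B: "\<And>v. v \<in> V \<Longrightarrow> v \<le> B" using V_bdd(1) unfolding bdd_above_def by blast
    show ?thesis
    proof (rule bdd_aboveI[of _ B])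
      fix \<eta> assume "\<eta> \<in> ?S"
      then have "measure P {r \<in> space P. \<eta> \<le> disc_val A w r} > 0" by (rule CollectD)
      from pos_in_run[OF this] obtain r where "is_run A w r" "\<eta> \<le> disc_val A w r" by blast
      moreover have "disc_val A w r \<in> V" using \<open>is_run A w r\<close> by blast
      ultimately show "\<eta> \<le> B" using B by force
    qed
  qed
  have "Sup ?S \<le> Sup V"
  proof (rule cSup_least[OF S_ne])
    fix \<eta> assume "\<eta> \<in> ?S"
    then have "measure P {r \<in> space P. \<eta> \<le> disc_val A w r} > 0" by (rule CollectD)
    from pos_in_run[OF this] obtain r where "is_run A w r" "\<eta> \<le> disc_val A w r" by blast
    moreover have "disc_val A w r \<in> V" using \<open>is_run A w r\<close> by blast
    then have "disc_val A w r \<le> Sup V" by (rule cSup_upper[OF _ V_bdd(1)])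
    ultimately show "\<eta> \<le> Sup V" by linarith
  qed
  moreover have "Sup V \<le> Sup ?S"
  proof (rule cSup_least[OF V_ne])
    fix v assume "v \<in> V"
    then obtain r where r: "is_run A w r" "v = disc_val A w r" by blast
    show "v \<le> Sup ?S"
    proof (rule field_le_epsilon)
      fix e :: real assume e: "0 < e"
      have "v - e \<in> ?S" using run_in_pos[OF r(1) e] unfolding r(2) by (rule CollectI)
      then have "v - e \<le> Sup ?S" by (rule cSup_upper[OF _ S_bdd])
      then show "v \<le> Sup ?S + e" by simp
    qed
  qed
  ultimately have "Sup ?S = Sup V" by (rule antisym)
  then show ?thesis unfolding PosDisc_lang_def NDisc_lang_def .
qed

lemma As_eq: "AsDisc_lang A w = UDisc_lang A w"
proof -
  interpret prob_space P by (rule P_prob[OF wf])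
  let ?T = "{\<eta>. measure P {r \<in> space P. \<eta> \<le> disc_val A w r} = 1}"
  obtain r0 where r0: "is_run A w r0" using run_exists[OF wf] by blast
  have InfT: "Inf V \<in> ?T"
  proof -
    have "AE r in P. Inf V \<le> disc_val A w r"
      using P_AE_run[OF wf, of w]
    proof (rule eventually_mono)
      fix r assume "is_run A w r"
      then have "disc_val A w r \<in> V" by blast
      then show "Inf V \<le> disc_val A w r" by (rule cInf_lower[OF _ V_bdd(2)])
    qed
    then have "measure P {r \<in> space P. Inf V \<le> disc_val A w r} = 1"
      using prob_Collect_eq_1[OF val_set_sets[OF wf, of w "Inf V"]] by simp
    then show ?thesis by (rule CollectI)
  qed
  have T_le: "\<eta> \<le> disc_val A w r" if "\<eta> \<in> ?T" "is_run A w r" for \<eta> r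
  proof (rule ccontr)
    assume "\<not> ?thesis"
    then have eps: "0 < \<eta> - disc_val A w r" by linarith
    obtain n where n: "\<forall>s s'. is_run A w s \<longrightarrow> is_run A w s' \<longrightarrow> (\<forall>i\<le>n. s i = s' i) \<longrightarrow>
           \<bar>disc_val A w s - disc_val A w s'\<bar> < \<eta> - disc_val A w r"
      using val_cont[OF wf eps, of w] by blast
    have "measure P {r \<in> space P. \<eta> \<le> disc_val A w r} \<le> measure P (space P - cyl n r)"
      by (rule finite_measure_mono_AE)
         (use cyl_AE[OF that(2) n] in \<open>rule eventually_mono, auto simp: P_space[OF wf] P_sets[OF wf] cyl_compl_sets\<close>)
    also have "\<dots> = 1 - measure P (cyl n r)" by (rule prob_compl) (simp add: P_sets[OF wf])
    also have "\<dots> < 1" using cyl_pos[OF that(2)] by simp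
    finally have "measure P {r \<in> space P. \<eta> \<le> disc_val A w r} < 1" .
    moreover have "measure P {r \<in> space P. \<eta> \<le> disc_val A w r} = 1" using that(1) by (rule CollectD)
    ultimately show False by linarith
  qed
  have T_ne: "?T \<noteq> {}" using InfT by (metis empty_iff)
  have T_bdd: "bdd_above ?T"
  proof (rule bdd_aboveI[of _ "disc_val A w r0"])
    fix \<eta> assume "\<eta> \<in> ?T" then show "\<eta> \<le> disc_val A w r0" by (rule T_le[OF _ r0])
  qed
  have "Sup ?T \<le> Inf V"
  proof (rule cSup_least[OF T_ne], rule cInf_greatest[OF V_ne])
    fix \<eta> v assume "\<eta> \<in> ?T" "v \<in> V"
    from \<open>v \<in> V\<close> obtain r where "is_run A w r" "v = disc_val A w r" by blast
    then show "\<eta> \<le> v" using T_le[OF \<open>\<eta> \<in> ?T\<close>] by simp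
  qed
  moreover have "Inf V \<le> Sup ?T" by (rule cSup_upper[OF InfT T_bdd])
  ultimately have "Sup ?T = Inf V" by (rule antisym)
  then show ?thesis unfolding AsDisc_lang_def UDisc_lang_def .
qed

end

theorem theorem5:
  shows "(reducible (NDisc_lang :: ('a::finite) pwa \<Rightarrow> _) PosDisc_lang \<and> reducible (PosDisc_lang :: 'a pwa \<Rightarrow> _) NDisc_lang)
       \<and> (reducible (UDisc_lang :: 'a pwa \<Rightarrow> _) AsDisc_lang \<and> reducible (AsDisc_lang :: 'a pwa \<Rightarrow> _) UDisc_lang)"
proof -
  have p: "PosDisc_lang A = NDisc_lang A" if "wf_disc_aut (A :: 'a pwa)" for A
    using Pos_eq[OF that] by (intro ext) simp
  have a: "AsDisc_lang A = UDisc_lang A" if "wf_disc_aut (A :: 'a pwa)" for A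
    using As_eq[OF that] by (intro ext) simp
  show ?thesis unfolding reducible_def
  proof (intro conjI allI impI)
    fix A :: "'a pwa" assume h: "wf_disc_aut A"
    show "\<exists>B. wf_disc_aut B \<and> NDisc_lang A = PosDisc_lang B" using h p[OF h] by auto
    show "\<exists>B. wf_disc_aut B \<and> PosDisc_lang A = NDisc_lang B" using h p[OF h] by auto
    show "\<exists>B. wf_disc_aut B \<and> UDisc_lang A = AsDisc_lang B" using h a[OF h] by auto
    show "\<exists>B. wf_disc_aut B \<and> AsDisc_lang A = UDisc_lang B" using h a[OF h] by auto
  qed
qed

end
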